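(* Let $0<\phi\le1$, let $\mathcal{Q}=\{P_1,\dots,P_k\}$ be a set of polygons and $w_i=\phi\cdot d(P_i)$. Let $P_{\min}=P_j\in\mathcal{Q}$ be a polygon minimizing $|P_j^+(w_j/2)|$ and write $P^+_{\min}(w/2)=P_j^+(w_j/2)$; let $d_{\min}=\min_{P_i\in\mathcal{Q}}d(P_i)$. Let $\cap\mathcal{Q}^-(w)=\bigcap_i P_i^-(w_i)$ and $\cap\mathcal{Q}^+(w/2)=\bigcap_i P_i^+(w_i/2)$. If $\cap\mathcal{Q}^-(w)\neq\emptyset$ and $\phi\cdot d_{\min}>\sqrt8$, then $$\frac{\phi^2}{2}\cdot|P^+_{\min}(w/2)|\le|\cap\mathcal{Q}^+(w/2)|\le|P^+_{\min}(w/2)|.$$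
   Context: $d(P)$ is the diameter of $P$. For a polygon $P$ and $r\ge0$, $P^+(r)$ is the set of points at distance at most $r$ from some point of $P$, and $P^-(r)$ is the set of points of $P$ at distance at least $r$ from every point outside $P$. $|X|$ denotes the number of points of $\mathbb{Z}^2$ in the region $X$. *)

theory Defs
  imports "HOL-Analysis.Analysis"
begin

type_synonym pt = "real^2"

fun polygonal_path :: "pt list \<Rightarrow> (real \<Rightarrow> pt)" where
  "polygonal_path [] = linepath 0 0"
| "polygonal_path [a] = linepath a a"
| "polygonal_path (a # b # xs) = linepath a b +++ polygonal_path (b # xs)"

definition polygon :: "pt set \<Rightarrow> bool" where
  "polygon P \<longleftrightarrow> (\<exists>vs. length vs \<ge> 3 \<and>
     simple_path (polygonal_path (vs @ [hd vs])) \<and>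
     P = path_image (polygonal_path (vs @ [hd vs])) \<union>
         inside (path_image (polygonal_path (vs @ [hd vs]))))"

definition outer :: "pt set \<Rightarrow> real \<Rightarrow> pt set" where
  "outer P r = {x. \<exists>p\<in>P. dist x p \<le> r}"

definition inner :: "pt set \<Rightarrow> real \<Rightarrow> pt set" where
  "inner P r = {x\<in>P. \<forall>y. y \<notin> P \<longrightarrow> dist x y \<ge> r}"

definition lattice :: "pt set" where
  "lattice = {x. \<forall>i. x $ i \<in> \<int>}"

definition lcount :: "pt set \<Rightarrow> nat" where
  "lcount X = card (X \<inter> lattice)"

end

theory Submission
  imports Defs
begin

lemma dist2_eq: "dist (x::pt) y = sqrt ((x$1 - y$1)^2 + (y$2 - x$2)^2)"
  by (simp add: dist_vec_def L2_set_def sum_2 dist_real_def power2_commute)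

lemma int_count_upper:
  fixes s L :: real
  shows "real (nat (\<lfloor>s + L\<rfloor> - \<lceil>s\<rceil> + 1)) \<le> L + 1 \<or> L < 0"
proof -
  have "real_of_int (\<lfloor>s + L\<rfloor> - \<lceil>s\<rceil> + 1) \<le> L + 1"
    using floor_correct[of "s+L"] ceiling_correct[of s] by simp linarith
  then show ?thesis by (cases "\<lfloor>s + L\<rfloor> - \<lceil>s\<rceil> + 1 \<ge> 0") auto
qed

lemma int_count_lower:
  fixes c h :: real
  assumes "h \<ge> 1/2"
  shows "2*h - 1 \<le> real (nat (\<lfloor>c + h\<rfloor> - \<lceil>c - h\<rceil> + 1))"
proof -
  have "2*h - 1 \<le> real_of_int (\<lfloor>c + h\<rfloor> - \<lceil>c - h\<rceil> + 1)"
    using floor_correct[of "c+h"] ceiling_correct[of "c-h"] by simp linarith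
  moreover have "real_of_int (\<lfloor>c + h\<rfloor> - \<lceil>c - h\<rceil> + 1) \<ge> 0"
    using calculation assms by linarith
  ultimately show ?thesis by simp
qed

lemma count_upper:
  fixes X :: "pt set" and L :: real
  assumes ne: "X \<noteq> {}" and bd: "\<forall>x\<in>X. \<forall>y\<in>X. \<forall>i. \<bar>x$i - y$i\<bar> \<le> L"
  shows "finite (X \<inter> lattice) \<and> real (card (X \<inter> lattice)) \<le> (L+1)^2"
proof -
  obtain x0 where x0: "x0 \<in> X" using ne by auto
  have L0: "L \<ge> 0" using bd x0 by fastforce
  define s where "s i = Inf ((\<lambda>x. x$i) ` X)" for i
  have sl: "s i \<le> x$i" and su: "x$i \<le> s i + L" if "x \<in> X" for x i
  proof -
    have bb: "bdd_below ((\<lambda>x. x$i) ` X)"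
    proof (rule bdd_belowI[of _ "x0$i - L"])
      fix z assume "z \<in> (\<lambda>x. x$i) ` X"
      then obtain x where x: "x \<in> X" "z = x$i" by auto
      show "x0$i - L \<le> z" using bd[rule_format, OF x0 x(1), of i] x(2) by (simp add: abs_le_iff)
    qed
    show "s i \<le> x$i" unfolding s_def using bb that by (simp add: cInf_lower)
    have "x$i - L \<le> s i" unfolding s_def
    proof (rule cInf_greatest)
      show "(\<lambda>x. x$i) ` X \<noteq> {}" using ne by simp
      fix z assume "z \<in> (\<lambda>x. x$i) ` X"
      then obtain y where y: "y \<in> X" "z = y$i" by auto
      show "x$i - L \<le> z" using bd[rule_format, OF that y(1), of i] y(2) by (simp add: abs_le_iff)
    qed
    then show "x$i \<le> s i + L" by simp
  qed
  define f where "f x = (\<lfloor>(x::pt)$1\<rfloor>, \<lfloor>x$2\<rfloor>)" for x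
  define T where "T = {\<lceil>s 1\<rceil>..\<lfloor>s 1 + L\<rfloor>} \<times> {\<lceil>s 2\<rceil>..\<lfloor>s 2 + L\<rfloor>}"
  have latI: "x$i \<in> \<int>" if "x \<in> lattice" for x i using that by (simp add: lattice_def)
  have inj: "inj_on f (X \<inter> lattice)"
  proof
    fix x y assume xy: "x \<in> X \<inter> lattice" "y \<in> X \<inter> lattice" "f x = f y"
    have "x$i = y$i" for i
    proof -
      have "\<lfloor>x$i\<rfloor> = \<lfloor>y$i\<rfloor>" using xy(3) exhaust_2[of i] unfolding f_def by auto
      moreover have "x$i \<in> \<int>" "y$i \<in> \<int>" using xy latI by auto
      moreover obtain a b where "x$i = of_int a" "y$i = of_int b"
        using \<open>x$i \<in> \<int>\<close> \<open>y$i \<in> \<int>\<close> by (auto elim!: Ints_cases)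
      ultimately show ?thesis by simp
    qed
    then show "x = y" by (simp add: vec_eq_iff)
  qed
  have sub: "f ` (X \<inter> lattice) \<subseteq> T"
  proof
    fix z assume "z \<in> f ` (X \<inter> lattice)"
    then obtain x where x: "x \<in> X" "x \<in> lattice" "z = f x" by auto
    have "\<lfloor>x$i\<rfloor> \<in> {\<lceil>s i\<rceil>..\<lfloor>s i + L\<rfloor>}" for i
    proof -
      obtain n where n: "x$i = of_int n" using latI[OF x(2)] Ints_cases by blast
      show ?thesis using sl[OF x(1), of i] su[OF x(1), of i] n
        by (simp add: ceiling_le_iff le_floor_iff)
    qed
    then show "z \<in> T" unfolding T_def x(3) f_def by auto
  qed
  have finT: "finite T" unfolding T_def by simp
  have fin: "finite (X \<inter> lattice)"
    using finite_imageD[OF finite_subset[OF sub finT] inj] .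
  have "card (X \<inter> lattice) \<le> card T" using card_inj_on_le[OF inj sub finT] .
  also have "card T = nat (\<lfloor>s 1 + L\<rfloor> - \<lceil>s 1\<rceil> + 1) * nat (\<lfloor>s 2 + L\<rfloor> - \<lceil>s 2\<rceil> + 1)"
    unfolding T_def by (simp add: card_cartesian_product)
  finally have "real (card (X \<inter> lattice)) \<le>
      real (nat (\<lfloor>s 1 + L\<rfloor> - \<lceil>s 1\<rceil> + 1)) * real (nat (\<lfloor>s 2 + L\<rfloor> - \<lceil>s 2\<rceil> + 1))"
    by (simp only: of_nat_le_iff of_nat_mult[symmetric])
  also have "\<dots> \<le> (L+1) * (L+1)"
    using int_count_upper[of "s 1" L] int_count_upper[of "s 2" L] L0
    by (intro mult_mono) auto
  finally show ?thesis using fin by (simp add: power2_eq_square)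
qed

lemma count_lower:
  fixes Y :: "pt set" and c :: pt and h :: real
  assumes h: "h \<ge> 1/2" and fin: "finite (Y \<inter> lattice)"
    and sq: "\<And>x. \<bar>x$1 - c$1\<bar> \<le> h \<Longrightarrow> \<bar>x$2 - c$2\<bar> \<le> h \<Longrightarrow> x \<in> Y"
  shows "(2*h - 1)^2 \<le> real (card (Y \<inter> lattice))"
proof -
  define g where "g = (\<lambda>(a::int, b::int). (vector [of_int a, of_int b] :: pt))"
  define S where "S = {\<lceil>c$1 - h\<rceil>..\<lfloor>c$1 + h\<rfloor>} \<times> {\<lceil>c$2 - h\<rceil>..\<lfloor>c$2 + h\<rfloor>}"
  have inj: "inj_on g S"
    by (auto simp: inj_on_def g_def vec_eq_iff forall_2 dest: spec[of _ 1] spec[of _ 2])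
  have sub: "g ` S \<subseteq> Y \<inter> lattice"
  proof
    fix z assume "z \<in> g ` S"
    then obtain a b where ab: "(a,b) \<in> S" "z = g (a,b)" by auto
    have "z$1 = of_int a" "z$2 = of_int b" using ab(2) by (auto simp: g_def)
    moreover have "\<bar>of_int a - c$1\<bar> \<le> h" "\<bar>of_int b - c$2\<bar> \<le> h"
      using ab(1) unfolding S_def
      by (auto simp: ceiling_le_iff le_floor_iff abs_le_iff)
    ultimately have "z \<in> Y" using sq by simp
    moreover have "z \<in> lattice" unfolding lattice_def
      using \<open>z$1 = of_int a\<close> \<open>z$2 = of_int b\<close> by (auto simp: forall_2)
    ultimately show "z \<in> Y \<inter> lattice" by simp
  qed
  have "card S = card (g ` S)" using card_image[OF inj] by simp
  also have "\<dots> \<le> card (Y \<inter> lattice)" using card_mono[OF fin sub] .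
  finally have cs: "real (card S) \<le> real (card (Y \<inter> lattice))" by simp
  have "card S = nat (\<lfloor>c$1 + h\<rfloor> - \<lceil>c$1 - h\<rceil> + 1) * nat (\<lfloor>c$2 + h\<rfloor> - \<lceil>c$2 - h\<rceil> + 1)"
    unfolding S_def by (simp add: card_cartesian_product)
  then have "real (card S) = real (nat (\<lfloor>c$1 + h\<rfloor> - \<lceil>c$1 - h\<rceil> + 1)) * real (nat (\<lfloor>c$2 + h\<rfloor> - \<lceil>c$2 - h\<rceil> + 1))"
    by simp
  moreover have "(2*h-1) * (2*h-1) \<le> \<dots>"
    using int_count_lower[OF h, of "c$1"] int_count_lower[OF h, of "c$2"] h
    by (intro mult_mono) auto
  ultimately show ?thesis using cs by (simp add: power2_eq_square)
qed

lemma outer_coord: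
  fixes P :: "pt set"
  assumes "bounded P" "r \<ge> 0"
  shows "\<forall>x\<in>outer P r. \<forall>y\<in>outer P r. \<forall>i. \<bar>x$i - y$i\<bar> \<le> diameter P + 2*r"
proof (intro ballI allI)
  fix x y i assume "x \<in> outer P r" "y \<in> outer P r"
  then obtain p q where pq: "p \<in> P" "q \<in> P" "dist x p \<le> r" "dist y q \<le> r"
    unfolding outer_def by auto
  have "\<bar>x$i - y$i\<bar> \<le> dist x y"
    using dist_vec_nth_le[of x i y] by (simp add: dist_real_def)
  also have "\<dots> \<le> dist x p + dist p q + dist q y"
    by (meson dist_triangle order_trans add_right_mono)
  also have "\<dots> \<le> r + diameter P + r"
    using diameter_bounded_bound[OF assms(1) pq(1,2)] pq(3,4) by (simp add: dist_commute)
  finally show "\<bar>x$i - y$i\<bar> \<le> diameter P + 2*r" by simp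
qed

lemma outer_ne: "P \<noteq> {} \<Longrightarrow> r \<ge> 0 \<Longrightarrow> outer P r \<noteq> {}"
proof -
  assume "P \<noteq> {}" "r \<ge> 0"
  then obtain p where "p \<in> P" by auto
  then have "p \<in> outer P r" using \<open>r \<ge> 0\<close> unfolding outer_def by (intro CollectI bexI[of _ p]) auto
  then show ?thesis by auto
qed

lemma polygon_bounded: "polygon P \<Longrightarrow> bounded P"
  unfolding polygon_def
  by (metis bounded_Un bounded_inside bounded_simple_path_image)

theorem lemma15:
  fixes \<phi> :: real and k :: nat and Q :: "nat \<Rightarrow> pt set" and j :: nat
  assumes "0 < \<phi>" "\<phi> \<le> 1"
    and "k \<ge> 1"
    and "\<forall>i<k. polygon (Q i)"
    and "j < k"
    and "\<forall>i<k. lcount (outer (Q j) (\<phi> * diameter (Q j) / 2))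
                 \<le> lcount (outer (Q i) (\<phi> * diameter (Q i) / 2))"
    and "(\<Inter>i\<in>{..<k}. inner (Q i) (\<phi> * diameter (Q i))) \<noteq> {}"
    and "\<phi> * (MIN i\<in>{..<k}. diameter (Q i)) > sqrt 8"
  shows "\<phi>^2 / 2 * real (lcount (outer (Q j) (\<phi> * diameter (Q j) / 2)))
           \<le> real (lcount (\<Inter>i\<in>{..<k}. outer (Q i) (\<phi> * diameter (Q i) / 2)))
       \<and> lcount (\<Inter>i\<in>{..<k}. outer (Q i) (\<phi> * diameter (Q i) / 2))
           \<le> lcount (outer (Q j) (\<phi> * diameter (Q j) / 2))"
proof -
  note phi = assms(1,2)
  define Y where "Y = (\<Inter>i\<in>{..<k}. outer (Q i) (\<phi> * diameter (Q i) / 2))"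
  obtain c where c: "\<And>i. i < k \<Longrightarrow> c \<in> inner (Q i) (\<phi> * diameter (Q i))"
    using assms(7) by auto
  have bdd: "bounded (Q i)" if "i < k" for i using assms(4) that polygon_bounded by auto
  have cQ: "c \<in> Q i" if "i < k" for i using c[OF that] by (simp add: inner_def)
  have ballQ: "y \<in> Q i" if "i < k" "dist c y < \<phi> * diameter (Q i)" for i y
    using c[OF that(1)] that(2) unfolding inner_def by force
  have dge0: "diameter (Q i) \<ge> 0" if "i < k" for i using diameter_ge_0 bdd[OF that] by blast
  have "(MIN i\<in>{..<k}. diameter (Q i)) \<in> (\<lambda>i. diameter (Q i)) ` {..<k}"
    using assms(3) by (intro Min_in) (auto simp: lessThan_empty_iff)
  then obtain m where m: "m < k" "diameter (Q m) = (MIN i\<in>{..<k}. diameter (Q i))" by auto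
  define w where "w = \<phi> * diameter (Q m)"
  have w8: "w > sqrt 8" using assms(8) m by (simp add: w_def)
  have wpos: "w > 0" using w8 by (smt (verit) real_sqrt_ge_zero)
  have "w^2 > 8" using w8 wpos by (smt (verit) real_sqrt_le_iff real_sqrt_pow2 power_strict_mono real_sqrt_ge_zero zero_less_numeral)
  then have w28: "w > 2.8"
  proof -
    assume w8': "w^2 > 8"
    show ?thesis
    proof (rule ccontr)
      assume "\<not> w > 2.8"
      then have "w^2 \<le> 2.8^2" using wpos by (intro power_mono) auto
      then show False using w8' by (simp add: power2_eq_square)
    qed
  qed
  have wi: "w \<le> \<phi> * diameter (Q i)" if "i < k" for i
    unfolding w_def using m phi that by (intro mult_left_mono) auto
  have ball_out: "y \<in> Y" if y: "dist y c < 3/2 * w" for y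
    unfolding Y_def
  proof (intro INT_I)
    fix i assume "i \<in> {..<k}"
    then have i: "i < k" by simp
    define r where "r = \<phi> * diameter (Q i)"
    have rw: "w \<le> r" using wi[OF i] r_def by simp
    show "y \<in> outer (Q i) (\<phi> * diameter (Q i) / 2)"
    proof (cases "dist c y < r")
      case True
      then show ?thesis using ballQ[OF i] wpos rw unfolding outer_def r_def by force
    next
      case False
      define t where "t = dist y c"
      have t: "t \<ge> r" "t < 3/2 * r" "t > 0" using False y rw wpos by (auto simp: t_def dist_commute)
      define p where "p = c + ((t - r/2)/t) *\<^sub>R (y - c)"
      have np: "norm (y - c) = t" by (simp add: t_def dist_norm)
      have "dist c p = \<bar>(t - r/2)/t\<bar> * t" by (simp add: p_def dist_norm np)
      also have "\<dots> = t - r/2" using t wpos rw by (simp add: abs_of_nonneg)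
      finally have "dist c p < r" using t by simp
      then have "p \<in> Q i" using ballQ[OF i] r_def by simp
      have "y - p = (r/2/t) *\<^sub>R (y - c)"
        using t by (simp add: p_def algebra_simps diff_divide_distrib)
      then have "dist y p = r/2 / t * t" using t wpos rw by (simp add: dist_norm np)
      then have "dist y p = r/2" using t by simp
      then show ?thesis using \<open>p \<in> Q i\<close> unfolding outer_def r_def by (intro CollectI bexI[of _ p]) auto
    qed
  qed
  have Qm_ne: "Q m \<noteq> {}" using cQ[OF m(1)] by auto
  have outm: "finite (outer (Q m) (w/2) \<inter> lattice) \<and>
      real (card (outer (Q m) (w/2) \<inter> lattice)) \<le> (diameter (Q m) + 2*(w/2) + 1)^2"
    apply (rule count_upper)
    using outer_ne[OF Qm_ne, of "w/2"] wpos apply simp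
    using outer_coord[OF bdd[OF m(1)], of "w/2"] wpos by simp
  define N where "N = lcount (outer (Q j) (\<phi> * diameter (Q j) / 2))"
  have NN: "N \<le> card (outer (Q m) (w/2) \<inter> lattice)"
    using assms(6) m(1) unfolding N_def lcount_def w_def by simp
  have Ydef': "Y \<subseteq> outer (Q j) (\<phi> * diameter (Q j) / 2)" unfolding Y_def using assms(5) by auto
  have finj: "finite (outer (Q j) (\<phi> * diameter (Q j) / 2) \<inter> lattice)"
  proof -
    have "Q j \<noteq> {}" using cQ[OF assms(5)] by auto
    then show ?thesis
      apply -
      apply (rule conjunct1[OF count_upper])
      using outer_ne[OF \<open>Q j \<noteq> {}\<close>, of "\<phi> * diameter (Q j) / 2"] dge0[OF assms(5)] phi apply simp
      using outer_coord[OF bdd[OF assms(5)], of "\<phi> * diameter (Q j) / 2"] phi dge0[OF assms(5)] by simp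
  qed
  have finY: "finite (Y \<inter> lattice)" using finj Ydef' by (meson finite_subset Int_mono order_refl)
  have part2: "lcount Y \<le> N"
    unfolding lcount_def N_def using finj Ydef' by (intro card_mono) auto
  define h where "h = 21/20 * w"
  have sq: "x \<in> Y" if "\<bar>x$1 - c$1\<bar> \<le> h" "\<bar>x$2 - c$2\<bar> \<le> h" for x
  proof (rule ball_out)
    have "(x$1 - c$1)^2 \<le> h^2" "(c$2 - x$2)^2 \<le> h^2" using that
      by (metis abs_le_square_iff abs_minus_commute abs_of_nonneg h_def wpos less_eq_real_def mult_pos_pos zero_less_divide_iff zero_less_numeral)+
    moreover have "(3/2*w)^2 - 2*h^2 = 18/400 * w^2" unfolding h_def by (simp add: power2_eq_square algebra_simps)
    moreover have "w^2 > 0" using wpos by simp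
    ultimately have "(x$1 - c$1)^2 + (c$2 - x$2)^2 < (3/2*w)^2" by linarith
    then have "sqrt ((x$1 - c$1)^2 + (c$2 - x$2)^2) < sqrt ((3/2*w)^2)"
      using real_sqrt_less_mono by blast
    then show "dist x c < 3/2 * w" using wpos by (simp add: dist2_eq)
  qed
  have low: "(2*h - 1)^2 \<le> real (card (Y \<inter> lattice))"
    using count_lower[of h Y c] sq finY w28 unfolding h_def by simp
  have key: "\<phi> * (diameter (Q m) + w + 1) \<le> 2*w + 1"
  proof -
    have "\<phi> * w \<le> w" using phi wpos by simp
    moreover have "\<phi> * (diameter (Q m) + w + 1) = w + \<phi>*w + \<phi>" unfolding w_def by (simp add: algebra_simps)
    ultimately show ?thesis using phi by linarith
  qed
  have "\<phi>^2/2 * real N \<le> \<phi>^2/2 * (diameter (Q m) + w + 1)^2"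
    using NN outm phi by (intro mult_left_mono) auto
  also have "\<dots> = (\<phi> * (diameter (Q m) + w + 1))^2 / 2" by (simp add: power_mult_distrib)
  also have "\<dots> \<le> (2*w+1)^2/2"
    using key phi dge0[OF m(1)] wpos by (intro divide_right_mono power_mono) auto
  also have "\<dots> \<le> (2*h - 1)^2"
  proof -
    have "w * (241/50 * w - 62/5) \<ge> 0" using w28 by (intro mult_nonneg_nonneg) auto
    then have a: "241/50 * (w*w) - 62/5 * w \<ge> 0" by (simp add: algebra_simps)
    have b: "(2*w+1)^2/2 = 2 * (w*w) + 2*w + 1/2" by (simp add: power2_eq_square field_simps)
    have c: "(2*h - 1)^2 = 441/100 * (w*w) - 21/5 * w + 1" unfolding h_def by (simp add: power2_eq_square field_simps)
    show ?thesis unfolding b c using a by linarith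
  qed
  also have "\<dots> \<le> real (lcount Y)" using low by (simp add: lcount_def)
  finally show ?thesis using part2 unfolding Y_def N_def by simp
qed

end
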